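(* Let $D$ be a unital commutative C*-algebra and let $\Delta\subseteq \mathrm{T}(D)$ be a closed convex set of tracial states whose set of extreme points $\partial\Delta$ is compact. Assume that for each $n\in\mathbb N$ there is a partition of unity $p_1,\dots,p_n\in\ell^\infty(D)/J_{2,\omega,\Delta}$ such that $\tau(p_i)=\frac1n$ for all $\tau\in\Delta_\omega$ and $i=1,\dots,n$, and such that $\Delta$ is ample with respect to each $p_i$, $i=1,\dots,n$. Then such a partition of unity satisfies $\tau(p_iap_i)=\frac1n\tau(a)$ for all $a\in D$, $\tau\in\Delta_\omega$, $i=1,\dots,n$. In particular, $(D,\Delta)$ is approximately divisible.
   Context: $\omega$ is a free ultrafilter on $\mathbb N$. $J_{2,\omega,\Delta}=\{(f_n)\in\ell^\infty(D):\lim_{n\to\omega}\sup_{\tau\in\Delta}\tau(|f_n|^2)=0\}$. $\Delta_\omega$ is the set of traces on $\ell^\infty(D)$ of the form $\tau((a_i))=\lim_{i\to\omega}\tau_i(a_i)$ with $\tau_i\in\Delta$; they vanish on $J_{2,\omega,\Delta}$ and are regarded as traces on the quotient. For a sequence $(\tau_n)$ in $\Delta$ write $(\tau_n)_\omega$ for this limit trace. Elements of $D$ are regarded as constant sequences. A partition of unity means mutually orthogonal projections summing to $1$. For a nonzero positive contraction $c=\overline{(c_n)}\in\ell^\infty(D)/J_{2,\omega,\Delta}$, $\Delta$ is ample with respect to $c$ if for every sequence $(\tau_n)$ in $\Delta$ the functionals $x\mapsto (\tau_n)_\omega(xc)/(\tau_n)_\omega(c)$ and $x\mapsto (\tau_n)_\omega(x(1-c))/(1-(\tau_n)_\omega(c))$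 on $D$ belong to $\Delta$ (when $(\tau_n)_\omega(c)=0$, only the second is required; when it equals $1$, only the first). $(D,\Delta)$ is approximately divisible if there is $K>0$ such that for each $n$ there is a partition of unity $p_1,\dots,p_n\in\ell^\infty(D)/J_{2,\omega,\Delta}$ with $\tau(p_iap_i)\le\frac Kn\tau(a)$ for all $a\in D^+$, $\tau\in\Delta_\omega$, $i=1,\dots,n$. *)

theory Defs
  imports "HOL-Analysis.Analysis"
begin

text \<open>Model: a unital commutative C*-algebra D is (by Gelfand duality) C(X) for a
compact Hausdorff space X; here X is a type 'a with t2 topology and compact UNIV,
and D = CX = continuous complex functions on X. Functionals on D are functions
(('a => complex) => complex) that vanish outside CX (extensional); the weak*
topology is then the product topology on the function type.\<close>

definition CX :: "('a::topological_space \<Rightarrow> complex) set" where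
  "CX = {f. continuous_on UNIV f}"

definition cmul :: "('a \<Rightarrow> complex) \<Rightarrow> ('a \<Rightarrow> complex) \<Rightarrow> ('a \<Rightarrow> complex)" where
  "cmul f g = (\<lambda>x. f x * g x)"

definition positive_el :: "('a::topological_space \<Rightarrow> complex) \<Rightarrow> bool" where
  "positive_el f \<longleftrightarrow> f \<in> CX \<and> (\<forall>x. Im (f x) = 0 \<and> Re (f x) \<ge> 0)"

definition tracial_state :: "(('a::topological_space \<Rightarrow> complex) \<Rightarrow> complex) \<Rightarrow> bool" where
  "tracial_state \<tau> \<longleftrightarrow>
     (\<forall>f. f \<notin> CX \<longrightarrow> \<tau> f = 0) \<and>
     (\<forall>f\<in>CX. \<forall>g\<in>CX. \<tau> (\<lambda>x. f x + g x) = \<tau> f + \<tau> g) \<and>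
     (\<forall>f\<in>CX. \<forall>c. \<tau> (\<lambda>x. c * f x) = c * \<tau> f) \<and>
     (\<forall>f. positive_el f \<longrightarrow> Im (\<tau> f) = 0 \<and> Re (\<tau> f) \<ge> 0) \<and>
     (\<forall>f\<in>CX. \<forall>g\<in>CX. \<tau> (cmul f g) = \<tau> (cmul g f)) \<and>
     \<tau> (\<lambda>x. 1) = 1"

definition convex_fset :: "(('a \<Rightarrow> complex) \<Rightarrow> complex) set \<Rightarrow> bool" where
  "convex_fset S \<longleftrightarrow> (\<forall>\<sigma>\<in>S. \<forall>\<rho>\<in>S. \<forall>t::real. 0 \<le> t \<and> t \<le> 1 \<longrightarrow>
      (\<lambda>f. complex_of_real t * \<sigma> f + complex_of_real (1 - t) * \<rho> f) \<in> S)"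

definition extreme_fpoints :: "(('a \<Rightarrow> complex) \<Rightarrow> complex) set \<Rightarrow> (('a \<Rightarrow> complex) \<Rightarrow> complex) set" where
  "extreme_fpoints S = {\<tau>\<in>S. \<forall>\<sigma>\<in>S. \<forall>\<rho>\<in>S. \<forall>t::real. 0 < t \<and> t < 1 \<and>
      \<tau> = (\<lambda>f. complex_of_real t * \<sigma> f + complex_of_real (1 - t) * \<rho> f) \<longrightarrow> \<sigma> = \<rho>}"

definition free_ultrafilter :: "nat filter \<Rightarrow> bool" where
  "free_ultrafilter \<omega> \<longleftrightarrow> \<omega> \<noteq> bot \<and> (\<forall>P. eventually P \<omega> \<or> eventually (\<lambda>n. \<not> P n) \<omega>)
      \<and> \<omega> \<le> cofinite"

definition linf :: "(nat \<Rightarrow> 'a::topological_space \<Rightarrow> complex) set" where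
  "linf = {s. (\<forall>k. s k \<in> CX) \<and> (\<exists>B. \<forall>k x. cmod (s k x) \<le> B)}"

definition J2 :: "nat filter \<Rightarrow> (('a::topological_space \<Rightarrow> complex) \<Rightarrow> complex) set
                  \<Rightarrow> (nat \<Rightarrow> 'a \<Rightarrow> complex) set" where
  "J2 \<omega> \<Delta> = {s\<in>linf. ((\<lambda>k. SUP \<tau>\<in>\<Delta>. Re (\<tau> (\<lambda>x. complex_of_real ((cmod (s k x))\<^sup>2)))) \<longlongrightarrow> 0) \<omega>}"

text \<open>Equality in the quotient ell^infty(D)/J (on representatives).\<close>
definition qeq :: "nat filter \<Rightarrow> (('a::topological_space \<Rightarrow> complex) \<Rightarrow> complex) set
                  \<Rightarrow> (nat \<Rightarrow> 'a \<Rightarrow> complex) \<Rightarrow> (nat \<Rightarrow> 'a \<Rightarrow> complex) \<Rightarrow> bool" where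
  "qeq \<omega> \<Delta> s t \<longleftrightarrow> (\<lambda>k x. s k x - t k x) \<in> J2 \<omega> \<Delta>"

definition smul :: "(nat \<Rightarrow> 'a \<Rightarrow> complex) \<Rightarrow> (nat \<Rightarrow> 'a \<Rightarrow> complex) \<Rightarrow> (nat \<Rightarrow> 'a \<Rightarrow> complex)" where
  "smul s t = (\<lambda>k. cmul (s k) (t k))"

definition omega_trace :: "nat filter \<Rightarrow> (nat \<Rightarrow> ('a \<Rightarrow> complex) \<Rightarrow> complex)
                          \<Rightarrow> (nat \<Rightarrow> 'a \<Rightarrow> complex) \<Rightarrow> complex" where
  "omega_trace \<omega> \<tau>s s = Lim \<omega> (\<lambda>k. \<tau>s k (s k))"

definition const_seq :: "('a \<Rightarrow> complex) \<Rightarrow> (nat \<Rightarrow> 'a \<Rightarrow> complex)" where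
  "const_seq a = (\<lambda>k. a)"

text \<open>p_1..p_n (indexed 0..n-1) is a partition of unity of projections in ell^infty(D)/J.\<close>
definition partition_of_unity :: "nat filter \<Rightarrow> (('a::topological_space \<Rightarrow> complex) \<Rightarrow> complex) set
     \<Rightarrow> nat \<Rightarrow> (nat \<Rightarrow> nat \<Rightarrow> 'a \<Rightarrow> complex) \<Rightarrow> bool" where
  "partition_of_unity \<omega> \<Delta> n p \<longleftrightarrow>
     (\<forall>i<n. p i \<in> linf) \<and>
     (\<forall>i<n. qeq \<omega> \<Delta> (smul (p i) (p i)) (p i)) \<and>
     (\<forall>i<n. qeq \<omega> \<Delta> (\<lambda>k x. cnj (p i k x)) (p i)) \<and>
     (\<forall>i<n. \<forall>j<n. i \<noteq> j \<longrightarrow> qeq \<omega> \<Delta> (smul (p i) (p j)) (\<lambda>k x. 0)) \<and>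
     qeq \<omega> \<Delta> (\<lambda>k x. \<Sum>i<n. p i k x) (\<lambda>k x. 1)"

definition ample :: "nat filter \<Rightarrow> (('a::topological_space \<Rightarrow> complex) \<Rightarrow> complex) set
     \<Rightarrow> (nat \<Rightarrow> 'a \<Rightarrow> complex) \<Rightarrow> bool" where
  "ample \<omega> \<Delta> c \<longleftrightarrow> (\<forall>\<tau>s. (\<forall>k. \<tau>s k \<in> \<Delta>) \<longrightarrow>
     (let t = omega_trace \<omega> \<tau>s c in
       (t \<noteq> 0 \<longrightarrow> (\<lambda>x. if x \<in> CX then omega_trace \<omega> \<tau>s (smul (const_seq x) c) / t else 0) \<in> \<Delta>) \<and>
       (t \<noteq> 1 \<longrightarrow> (\<lambda>x. if x \<in> CX then
            omega_trace \<omega> \<tau>s (smul (const_seq x) (\<lambda>k y. 1 - c k y)) / (1 - t) else 0) \<in> \<Delta>)))"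

definition approx_divisible :: "nat filter \<Rightarrow> (('a::topological_space \<Rightarrow> complex) \<Rightarrow> complex) set \<Rightarrow> bool" where
  "approx_divisible \<omega> \<Delta> \<longleftrightarrow> (\<exists>K::real. K > 0 \<and> (\<forall>n::nat. n \<ge> 1 \<longrightarrow>
     (\<exists>p. partition_of_unity \<omega> \<Delta> n p \<and>
        (\<forall>a \<tau>s i. positive_el a \<and> (\<forall>k. \<tau>s k \<in> \<Delta>) \<and> i < n \<longrightarrow>
           Re (omega_trace \<omega> \<tau>s (smul (smul (p i) (const_seq a)) (p i)))
             \<le> K / real n * Re (omega_trace \<omega> \<tau>s (const_seq a))))))"

end

theory Submission
  imports Defs
begin


lemma CX_iff: "f \<in> CX \<longleftrightarrow> continuous_on UNIV f" by (simp add: CX_def)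

lemma tr_add: "tracial_state \<tau> \<Longrightarrow> f \<in> CX \<Longrightarrow> g \<in> CX \<Longrightarrow> \<tau> (\<lambda>x. f x + g x) = \<tau> f + \<tau> g"
  by (simp add: tracial_state_def)
lemma tr_scale: "tracial_state \<tau> \<Longrightarrow> f \<in> CX \<Longrightarrow> \<tau> (\<lambda>x. c * f x) = c * \<tau> f"
  by (simp add: tracial_state_def)
lemma tr_out: "tracial_state \<tau> \<Longrightarrow> f \<notin> CX \<Longrightarrow> \<tau> f = 0"
  by (simp add: tracial_state_def)
lemma tr_one: "tracial_state \<tau> \<Longrightarrow> \<tau> (\<lambda>x. 1) = 1"
  by (simp add: tracial_state_def)
lemma tr_pos: "tracial_state \<tau> \<Longrightarrow> positive_el f \<Longrightarrow> Im (\<tau> f) = 0 \<and> Re (\<tau> f) \<ge> 0"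
  by (simp add: tracial_state_def)

lemma tr_const: "tracial_state \<tau> \<Longrightarrow> \<tau> (\<lambda>x. c) = c"
proof -
  assume t: "tracial_state \<tau>"
  have "(\<lambda>x::'a. 1::complex) \<in> CX" by (simp add: CX_iff)
  then have "\<tau> (\<lambda>x. c * 1) = c * \<tau> (\<lambda>x. 1)" using tr_scale[OF t] by blast
  then show ?thesis using tr_one[OF t] by simp
qed

lemma tr_diff: "tracial_state \<tau> \<Longrightarrow> f \<in> CX \<Longrightarrow> g \<in> CX \<Longrightarrow> \<tau> (\<lambda>x. f x - g x) = \<tau> f - \<tau> g"
proof -
  assume t: "tracial_state \<tau>" and f: "f \<in> CX" and g: "g \<in> CX"
  have g': "(\<lambda>x. (-1) * g x) \<in> CX" using g by (auto simp: CX_iff intro!: continuous_intros)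
  have "\<tau> (\<lambda>x. f x - g x) = \<tau> (\<lambda>x. f x + (\<lambda>x. (-1) * g x) x)" by simp
  also have "\<dots> = \<tau> f + \<tau> (\<lambda>x. (-1) * g x)" using tr_add[OF t f g'] by simp
  also have "\<dots> = \<tau> f - \<tau> g" using tr_scale[OF t g, of "-1"] by simp
  finally show ?thesis .
qed

lemma tr_real_pos: "tracial_state \<tau> \<Longrightarrow> continuous_on UNIV r \<Longrightarrow> (\<And>x. r x \<ge> 0)
  \<Longrightarrow> Im (\<tau> (\<lambda>x. complex_of_real (r x))) = 0 \<and> Re (\<tau> (\<lambda>x. complex_of_real (r x))) \<ge> 0"
  by (rule tr_pos) (auto simp: positive_el_def CX_iff intro!: continuous_intros)

lemma tr_real_mono: assumes t: "tracial_state \<tau>" and c: "continuous_on UNIV r" "continuous_on UNIV s"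
  and le: "\<And>x. r x \<le> s x"
  shows "Re (\<tau> (\<lambda>x. complex_of_real (r x))) \<le> Re (\<tau> (\<lambda>x. complex_of_real (s x)))"
    "Im (\<tau> (\<lambda>x. complex_of_real (r x))) = Im (\<tau> (\<lambda>x. complex_of_real (s x)))"
proof -
  have d: "\<tau> (\<lambda>x. complex_of_real (s x - r x)) = \<tau> (\<lambda>x. complex_of_real (s x)) - \<tau> (\<lambda>x. complex_of_real (r x))"
    using tr_diff[OF t, of "\<lambda>x. complex_of_real (s x)" "\<lambda>x. complex_of_real (r x)"] c
    by (auto simp: CX_iff intro!: continuous_intros)
  have "Im (\<tau> (\<lambda>x. complex_of_real (s x - r x))) = 0 \<and> Re (\<tau> (\<lambda>x. complex_of_real (s x - r x))) \<ge> 0"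
    using c le by (intro tr_real_pos[OF t]) (auto intro!: continuous_intros)
  then show "Re (\<tau> (\<lambda>x. complex_of_real (r x))) \<le> Re (\<tau> (\<lambda>x. complex_of_real (s x)))"
    "Im (\<tau> (\<lambda>x. complex_of_real (r x))) = Im (\<tau> (\<lambda>x. complex_of_real (s x)))"
    unfolding d by auto
qed



lemma CX_of_real: "continuous_on UNIV r \<Longrightarrow> (\<lambda>x. complex_of_real (r x)) \<in> CX"
  unfolding CX_iff by (rule continuous_on_of_real)

lemma tr_affine: assumes t: "tracial_state \<tau>" and f: "f \<in> CX"
  shows "\<tau> (\<lambda>x. c + d * f x) = c + d * \<tau> f"
proof -
  have a: "(\<lambda>x::'a. c) \<in> CX" "(\<lambda>x. d * f x) \<in> CX" using f by (auto simp: CX_iff intro: continuous_intros)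
  show ?thesis using tr_add[OF t a] tr_const[OF t] tr_scale[OF t f] by simp
qed

lemma sq_bound: fixes u e :: real assumes "e > 0" shows "\<bar>u\<bar> \<le> e/2 + u^2/(2*e)"
proof -
  have "0 \<le> (e - \<bar>u\<bar>)^2/(2*e)" using assms by simp
  also have "(e - \<bar>u\<bar>)^2/(2*e) = e/2 + u^2/(2*e) - \<bar>u\<bar>" using assms
    by (simp add: field_simps power2_eq_square)
  finally show ?thesis by simp
qed

lemma tr_realpart: assumes t: "tracial_state \<tau>" and c: "continuous_on UNIV u" and e: "e > 0"
  shows "Im (\<tau> (\<lambda>x. complex_of_real (u x))) = 0"
    "\<bar>Re (\<tau> (\<lambda>x. complex_of_real (u x)))\<bar> \<le> Re (\<tau> (\<lambda>x. complex_of_real (e/2 + (u x)^2/(2*e))))"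
proof -
  let ?w = "\<lambda>x. e/2 + (u x)^2/(2*e)"
  have cw: "continuous_on UNIV ?w" using c e by (intro continuous_intros) auto
  have b: "\<And>x. \<bar>u x\<bar> \<le> ?w x" using sq_bound[OF e] by blast
  have m1: "Re (\<tau> (\<lambda>x. complex_of_real (u x))) \<le> Re (\<tau> (\<lambda>x. complex_of_real (?w x)))"
     "Im (\<tau> (\<lambda>x. complex_of_real (u x))) = Im (\<tau> (\<lambda>x. complex_of_real (?w x)))"
    using tr_real_mono[OF t c cw] b abs_le_D1 by blast+
  have cm: "continuous_on UNIV (\<lambda>x. - u x)" using c by (intro continuous_intros)
  have m2: "Re (\<tau> (\<lambda>x. complex_of_real (- u x))) \<le> Re (\<tau> (\<lambda>x. complex_of_real (?w x)))"
    using tr_real_mono[OF t cm cw] b by (meson abs_le_D2)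
  have "\<tau> (\<lambda>x. complex_of_real (- u x)) = \<tau> (\<lambda>x. (-1) * complex_of_real (u x))" by simp
  also have "\<dots> = - \<tau> (\<lambda>x. complex_of_real (u x))"
    using tr_scale[OF t, of "\<lambda>x. complex_of_real (u x)" "-1"] c
    by (simp add: CX_iff continuous_on_of_real)
  finally have m3: "\<tau> (\<lambda>x. complex_of_real (- u x)) = - \<tau> (\<lambda>x. complex_of_real (u x))" .
  have "Im (\<tau> (\<lambda>x. complex_of_real (?w x))) = 0"
    using tr_real_pos[OF t cw] e by (simp add: add_nonneg_nonneg)
  then show "Im (\<tau> (\<lambda>x. complex_of_real (u x))) = 0" using m1 by simp
  show "\<bar>Re (\<tau> (\<lambda>x. complex_of_real (u x)))\<bar> \<le> Re (\<tau> (\<lambda>x. complex_of_real (?w x)))"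
    using m1 m2 m3 by auto
qed

lemma tr_key: assumes t: "tracial_state \<tau>" and g: "g \<in> CX" and e: "e > 0"
  shows "cmod (\<tau> g) \<le> e + Re (\<tau> (\<lambda>x. complex_of_real ((cmod (g x))\<^sup>2))) / e"
proof -
  define u where "u = (\<lambda>x. Re (g x))"
  define v where "v = (\<lambda>x. Im (g x))"
  have cg: "continuous_on UNIV g" using g by (simp add: CX_iff)
  have cu: "continuous_on UNIV u" unfolding u_def using cg by (intro continuous_intros)
  have cv: "continuous_on UNIV v" unfolding v_def using cg by (intro continuous_intros)
  have U: "(\<lambda>x. complex_of_real (u x)) \<in> CX" using cu by (simp add: CX_iff continuous_on_of_real)
  have V: "(\<lambda>x. complex_of_real (v x)) \<in> CX" using cv by (simp add: CX_iff continuous_on_of_real)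
  have V': "(\<lambda>x. \<i> * complex_of_real (v x)) \<in> CX" using cv by (simp add: CX_iff continuous_intros continuous_on_of_real)
  have geq: "g = (\<lambda>x. complex_of_real (u x) + (\<lambda>x. \<i> * complex_of_real (v x)) x)"
    by (rule ext) (simp add: u_def v_def complex_eq_iff)
  have tg: "\<tau> g = \<tau> (\<lambda>x. complex_of_real (u x)) + \<i> * \<tau> (\<lambda>x. complex_of_real (v x))"
    by (subst geq, subst tr_add[OF t U V']) (simp add: tr_scale[OF t V])
  note ru = tr_realpart[OF t cu e] and rv = tr_realpart[OF t cv e]
  let ?wu = "\<lambda>x. e/2 + (u x)^2/(2*e)" and ?wv = "\<lambda>x. e/2 + (v x)^2/(2*e)"
  let ?G = "\<lambda>x. complex_of_real ((cmod (g x))\<^sup>2)"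
  have cG: "?G \<in> CX" using cg by (simp add: CX_iff continuous_intros continuous_on_of_real)
  have sumw: "(\<lambda>x. complex_of_real (?wu x) + complex_of_real (?wv x)) = (\<lambda>x. complex_of_real e + complex_of_real (1/(2*e)) * ?G x)"
    using e by (intro ext) (simp add: u_def v_def cmod_power2 field_simps)
  have cwu: "(\<lambda>x. complex_of_real (?wu x)) \<in> CX" using cu e by (intro CX_of_real continuous_intros) auto
  have cwv: "(\<lambda>x. complex_of_real (?wv x)) \<in> CX" using cv e by (intro CX_of_real continuous_intros) auto
  have eqS: "\<tau> (\<lambda>x. complex_of_real (?wu x)) + \<tau> (\<lambda>x. complex_of_real (?wv x)) = complex_of_real e + complex_of_real (1/(2*e)) * \<tau> ?G"
    using tr_add[OF t cwu cwv, symmetric] arg_cong[OF sumw, of \<tau>] tr_affine[OF t cG] by (simp only:)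
  have S: "Re (\<tau> (\<lambda>x. complex_of_real (?wu x))) + Re (\<tau> (\<lambda>x. complex_of_real (?wv x))) = e + Re (\<tau> ?G) / (2*e)"
    using arg_cong[OF eqS, of Re] by simp
  have "continuous_on UNIV (\<lambda>x. (cmod (g x))\<^sup>2)" using cg by (intro continuous_intros)
  then have Gp: "Re (\<tau> ?G) \<ge> 0" using tr_real_pos[OF t, of "\<lambda>x. (cmod (g x))\<^sup>2"] by simp
  have "cmod (\<tau> g) \<le> cmod (\<tau> (\<lambda>x. complex_of_real (u x))) + cmod (\<i> * \<tau> (\<lambda>x. complex_of_real (v x)))"
    unfolding tg by (rule norm_triangle_ineq)
  also have "\<dots> = \<bar>Re (\<tau> (\<lambda>x. complex_of_real (u x)))\<bar> + \<bar>Re (\<tau> (\<lambda>x. complex_of_real (v x)))\<bar>"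
    using ru(1) rv(1) by (simp add: norm_mult cmod_eq_Re)
  also have "\<dots> \<le> e + Re (\<tau> ?G) / (2*e)" using ru(2) rv(2) S by linarith
  also have "\<dots> \<le> e + Re (\<tau> ?G) / e" using Gp e by (simp add: frac_le)
  finally show ?thesis .
qed



lemma tr_sq_le: assumes t: "tracial_state \<tau>" and g: "g \<in> CX" and b: "\<And>x. cmod (g x) \<le> B"
  shows "Re (\<tau> (\<lambda>x. complex_of_real ((cmod (g x))\<^sup>2))) \<le> B^2"
proof -
  have cg: "continuous_on UNIV g" using g by (simp add: CX_iff)
  have B0: "0 \<le> B" using b[of undefined] norm_ge_zero order_trans by blast
  have "Re (\<tau> (\<lambda>x. complex_of_real ((cmod (g x))\<^sup>2))) \<le> Re (\<tau> (\<lambda>x. complex_of_real (B^2)))"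
    using b by (intro tr_real_mono[OF t]) (auto intro!: continuous_intros cg power_mono)
  also have "\<dots> = B^2" using tr_const[OF t] by simp
  finally show ?thesis .
qed

lemma tr_bound: assumes t: "tracial_state \<tau>" and g: "g \<in> CX" and b: "\<And>x. cmod (g x) \<le> B"
  shows "cmod (\<tau> g) \<le> 1 + B^2"
  using tr_key[OF t g, of 1] tr_sq_le[OF t g b] by simp

lemma CX_bounded: assumes "compact (UNIV::'a::topological_space set)" "f \<in> CX"
  shows "\<exists>B. \<forall>x::'a. cmod (f x) \<le> B"
proof -
  have "compact (f ` UNIV)" using assms by (intro compact_continuous_image) (auto simp: CX_iff)
  then have "bounded (f ` UNIV)" by (rule compact_imp_bounded)
  then show ?thesis by (auto simp: bounded_iff)
qed

lemma ultra_lim: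
  fixes f :: "nat \<Rightarrow> 'b::topological_space"
  assumes u: "free_ultrafilter \<omega>" and K: "compact K" and fk: "\<And>k. f k \<in> K"
  shows "\<exists>l\<in>K. (f \<longlongrightarrow> l) \<omega>"
proof -
  have nb: "\<omega> \<noteq> bot" and ul: "\<And>P. eventually P \<omega> \<or> eventually (\<lambda>n. \<not> P n) \<omega>"
    using u by (auto simp: free_ultrafilter_def)
  let ?F = "filtermap f \<omega>"
  have "?F \<noteq> bot" using nb by (simp add: filtermap_bot_iff)
  moreover have "eventually (\<lambda>x. x \<in> K) ?F" using fk by (simp add: eventually_filtermap)
  ultimately obtain l where l: "l \<in> K" "inf (nhds l) ?F \<noteq> bot"
    using K unfolding compact_filter by blast
  have "(f \<longlongrightarrow> l) \<omega>"
    unfolding tendsto_def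
  proof (intro allI impI)
    fix S assume S: "open S" "l \<in> S"
    show "eventually (\<lambda>k. f k \<in> S) \<omega>"
    proof (rule ccontr)
      assume "\<not> eventually (\<lambda>k. f k \<in> S) \<omega>"
      then have "eventually (\<lambda>k. f k \<notin> S) \<omega>" using ul[of "\<lambda>k. f k \<in> S"] by blast
      then have e1: "eventually (\<lambda>y. y \<notin> S) ?F" by (simp add: eventually_filtermap)
      have e2: "eventually (\<lambda>y. y \<in> S) (nhds l)" using S by (rule eventually_nhds_in_open)
      have "eventually (\<lambda>y. False) (inf (nhds l) ?F)"
        unfolding eventually_inf using e1 e2 by blast
      then show False using l(2) by (simp add: eventually_False)
    qed
  qed
  then show ?thesis using l by blast
qed

lemma ultra_conv:
  fixes z :: "nat \<Rightarrow> complex"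
  assumes u: "free_ultrafilter \<omega>" and b: "\<And>k. cmod (z k) \<le> B"
  shows "(z \<longlongrightarrow> Lim \<omega> z) \<omega>"
proof -
  have nb: "\<omega> \<noteq> bot" using u by (auto simp: free_ultrafilter_def)
  obtain l where "(z \<longlongrightarrow> l) \<omega>" using ultra_lim[OF u compact_cball, of z 0 B] b by auto
  then show ?thesis using tendsto_Lim[of \<omega>] nb by (metis trivial_limit_def)
qed

lemma linf_CX: "s \<in> linf \<Longrightarrow> s k \<in> CX" by (simp add: linf_def)
lemma linf_bd: "s \<in> linf \<Longrightarrow> \<exists>B. \<forall>k x. cmod (s k x) \<le> B" by (simp add: linf_def)

lemma J_X_tendsto:
  assumes tr: "\<forall>\<tau>\<in>\<Delta>. tracial_state \<tau>" and q: "q \<in> J2 \<omega> \<Delta>" and ts: "\<And>k. \<tau>s k \<in> \<Delta>"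
  shows "((\<lambda>k. Re (\<tau>s k (\<lambda>x. complex_of_real ((cmod (q k x))\<^sup>2)))) \<longlongrightarrow> 0) \<omega>"
proof -
  have ql: "q \<in> linf" and S: "((\<lambda>k. SUP \<tau>\<in>\<Delta>. Re (\<tau> (\<lambda>x. complex_of_real ((cmod (q k x))\<^sup>2)))) \<longlongrightarrow> 0) \<omega>"
    using q by (auto simp: J2_def)
  obtain B where B: "\<And>k x. cmod (q k x) \<le> B" using linf_bd[OF ql] by blast
  have up: "Re (\<tau>s k (\<lambda>x. complex_of_real ((cmod (q k x))\<^sup>2))) \<le> (SUP \<tau>\<in>\<Delta>. Re (\<tau> (\<lambda>x. complex_of_real ((cmod (q k x))\<^sup>2))))" for k
  proof (rule cSUP_upper[OF ts])
    show "bdd_above ((\<lambda>\<tau>. Re (\<tau> (\<lambda>x. complex_of_real ((cmod (q k x))\<^sup>2)))) ` \<Delta>)"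
      unfolding bdd_above_def using tr_sq_le[OF _ linf_CX[OF ql] B] tr by blast
  qed
  have lo: "0 \<le> Re (\<tau>s k (\<lambda>x. complex_of_real ((cmod (q k x))\<^sup>2)))" for k
  proof -
    have "continuous_on UNIV (\<lambda>x. (cmod (q k x))\<^sup>2)" using linf_CX[OF ql, of k]
      by (simp add: CX_iff continuous_intros)
    then show ?thesis using tr_real_pos[of "\<tau>s k" "\<lambda>x. (cmod (q k x))\<^sup>2"] tr ts by simp
  qed
  show ?thesis
    by (rule tendsto_sandwich[OF _ _ tendsto_const S]) (use up lo in auto)
qed

lemma J_van:
  assumes tr: "\<forall>\<tau>\<in>\<Delta>. tracial_state \<tau>" and q: "q \<in> J2 \<omega> \<Delta>" and ts: "\<And>k. \<tau>s k \<in> \<Delta>"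
    and r: "\<And>k. r k \<in> CX" and M: "M \<ge> 0" and rb: "\<And>k x. cmod (r k x) \<le> M * cmod (q k x)"
  shows "((\<lambda>k. \<tau>s k (r k)) \<longlongrightarrow> 0) \<omega>"
proof -
  let ?X = "\<lambda>k. Re (\<tau>s k (\<lambda>x. complex_of_real ((cmod (q k x))\<^sup>2)))"
  have X: "(?X \<longlongrightarrow> 0) \<omega>" by (rule J_X_tendsto[OF tr q ts])
  have ql: "q \<in> linf" using q by (simp add: J2_def)
  have t: "tracial_state (\<tau>s k)" for k using tr ts by blast
  have rle: "Re (\<tau>s k (\<lambda>x. complex_of_real ((cmod (r k x))\<^sup>2))) \<le> M^2 * ?X k" for k
  proof -
    have cq: "continuous_on UNIV (q k)" and cr: "continuous_on UNIV (r k)"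
      using linf_CX[OF ql] r by (auto simp: CX_iff)
    have "Re (\<tau>s k (\<lambda>x. complex_of_real ((cmod (r k x))\<^sup>2))) \<le> Re (\<tau>s k (\<lambda>x. complex_of_real (M^2 * (cmod (q k x))\<^sup>2)))"
    proof (intro tr_real_mono[OF t])
      show "(cmod (r k x))\<^sup>2 \<le> M\<^sup>2 * (cmod (q k x))\<^sup>2" for x
        using power_mono[OF rb[of k x], of 2] by (simp add: power_mult_distrib)
    qed (auto intro!: continuous_intros cq cr)
    also have "\<tau>s k (\<lambda>x. complex_of_real (M^2 * (cmod (q k x))\<^sup>2)) = complex_of_real (M^2) * \<tau>s k (\<lambda>x. complex_of_real ((cmod (q k x))\<^sup>2))"
    proof -
      have "(\<lambda>x. complex_of_real ((cmod (q k x))\<^sup>2)) \<in> CX" using cq by (intro CX_of_real continuous_intros)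
      from tr_scale[OF t this, where c="complex_of_real (M^2)"] show ?thesis by simp
    qed
    finally show ?thesis by simp
  qed
  show ?thesis
  proof (rule tendstoI)
    fix e :: real assume e: "e > 0"
    have "((\<lambda>k. M^2 * ?X k) \<longlongrightarrow> M^2 * 0) \<omega>" by (intro tendsto_mult tendsto_const X)
    then have ev: "eventually (\<lambda>k. M^2 * ?X k < (e/2)^2) \<omega>" using e by (intro order_tendstoD) auto
    show "eventually (\<lambda>k. dist (\<tau>s k (r k)) 0 < e) \<omega>"
    proof (rule eventually_mono[OF ev])
      fix k assume k: "M^2 * ?X k < (e/2)^2"
      have "cmod (\<tau>s k (r k)) \<le> e/2 + Re (\<tau>s k (\<lambda>x. complex_of_real ((cmod (r k x))\<^sup>2))) / (e/2)"
        using tr_key[OF t r, of "e/2"] e by simp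
      also have "\<dots> \<le> e/2 + M^2 * ?X k / (e/2)" using rle[of k] e by (simp add: divide_right_mono)
      also have "\<dots> < e/2 + (e/2)^2 / (e/2)" using k e by (simp add: divide_strict_right_mono)
      also have "\<dots> = e" using e by (simp add: power2_eq_square)
      finally show "dist (\<tau>s k (r k)) 0 < e" by simp
    qed
  qed
qed



definition comb :: "real \<Rightarrow> (('b \<Rightarrow> complex) \<Rightarrow> complex) \<Rightarrow> (('b \<Rightarrow> complex) \<Rightarrow> complex) \<Rightarrow> (('b \<Rightarrow> complex) \<Rightarrow> complex)" where
  "comb t \<sigma> \<rho> = (\<lambda>f. complex_of_real t * \<sigma> f + complex_of_real (1 - t) * \<rho> f)"

definition face where
  "face K F \<longleftrightarrow> F \<subseteq> K \<and> (\<forall>\<sigma>\<in>K. \<forall>\<rho>\<in>K. \<forall>t. 0 < t \<and> t < 1 \<and> comb t \<sigma> \<rho> \<in> F \<longrightarrow> \<sigma> \<in> F \<and> \<rho> \<in> F)"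

definition affine_on where
  "affine_on K \<psi> \<longleftrightarrow> (\<forall>\<sigma>\<in>K. \<forall>\<rho>\<in>K. \<forall>t. 0 < t \<and> t < 1 \<longrightarrow> \<psi> (comb t \<sigma> \<rho>) = t * \<psi> \<sigma> + (1 - t) * \<psi> \<rho>)"

lemma argmax_face:
  fixes \<psi> :: "(('b \<Rightarrow> complex) \<Rightarrow> complex) \<Rightarrow> real"
  assumes f: "face K F" and c: "compact F" "closed F" and ne: "F \<noteq> {}"
    and cont: "continuous_on F \<psi>" and aff: "affine_on K \<psi>"
  shows "\<exists>F'. F' = {\<sigma>\<in>F. \<forall>\<rho>\<in>F. \<psi> \<rho> \<le> \<psi> \<sigma>} \<and> face K F' \<and> F' \<noteq> {} \<and> closed F'"
proof -
  obtain x0 where x0: "x0 \<in> F" "\<forall>y\<in>F. \<psi> y \<le> \<psi> x0" using continuous_attains_sup[OF c(1) ne cont] by blast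
  let ?F' = "{\<sigma>\<in>F. \<forall>\<rho>\<in>F. \<psi> \<rho> \<le> \<psi> \<sigma>}"
  have eq: "?F' = F \<inter> \<psi> -` {\<psi> x0}" using x0 by (auto intro: order.antisym)
  have cl: "closed ?F'" unfolding eq by (rule continuous_closed_preimage[OF cont c(2)]) simp
  have fc1: "?F' \<subseteq> K" using f by (auto simp: face_def)
  have fc2: "\<forall>\<sigma>\<in>K. \<forall>\<rho>\<in>K. \<forall>t. 0 < t \<and> t < 1 \<and> comb t \<sigma> \<rho> \<in> ?F' \<longrightarrow> \<sigma> \<in> ?F' \<and> \<rho> \<in> ?F'"
  proof (intro ballI allI impI)
    fix \<sigma> \<rho> t assume s: "\<sigma> \<in> K" "\<rho> \<in> K" and h: "0 < t \<and> t < 1 \<and> comb t \<sigma> \<rho> \<in> ?F'"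
    then have inF: "\<sigma> \<in> F" "\<rho> \<in> F" using f unfolding face_def by blast+
    have m: "\<psi> (comb t \<sigma> \<rho>) = \<psi> x0" using h x0 by (auto intro: order.antisym)
    have a: "\<psi> (comb t \<sigma> \<rho>) = t * \<psi> \<sigma> + (1 - t) * \<psi> \<rho>" using aff s h by (auto simp: affine_on_def)
    have l1: "\<psi> \<sigma> \<le> \<psi> x0" "\<psi> \<rho> \<le> \<psi> x0" using x0 inF by auto
    have "\<psi> \<sigma> = \<psi> x0"
    proof (rule ccontr)
      assume "\<psi> \<sigma> \<noteq> \<psi> x0" then have "\<psi> \<sigma> < \<psi> x0" using l1 by simp
      then have "t * \<psi> \<sigma> < t * \<psi> x0" using h by simp
      moreover have "(1 - t) * \<psi> \<rho> \<le> (1 - t) * \<psi> x0" using h l1 by (simp add: mult_left_mono)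
      ultimately show False using m a by (simp add: algebra_simps)
    qed
    moreover have "\<psi> \<rho> = \<psi> x0"
    proof (rule ccontr)
      assume "\<psi> \<rho> \<noteq> \<psi> x0" then have "\<psi> \<rho> < \<psi> x0" using l1 by simp
      then have "(1 - t) * \<psi> \<rho> < (1 - t) * \<psi> x0" using h by simp
      moreover have "t * \<psi> \<sigma> \<le> t * \<psi> x0" using h l1 by (simp add: mult_left_mono)
      ultimately show False using m a by (simp add: algebra_simps)
    qed
    ultimately show "\<sigma> \<in> ?F' \<and> \<rho> \<in> ?F'" using inF x0 by auto
  qed
  have fc: "face K ?F'" using fc1 fc2 unfolding face_def by blast
  show ?thesis using fc cl x0 by blast
qed

lemma finite_chain_min:
  assumes "finite C" "C \<noteq> {}" "\<forall>a\<in>C. \<forall>b\<in>C. a \<subseteq> b \<or> b \<subseteq> a"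
  shows "\<exists>m\<in>C. \<forall>x\<in>C. m \<subseteq> x"
  using assms
proof (induction C rule: finite_ne_induct)
  case (singleton x) then show ?case by auto
next
  case (insert x F)
  then obtain m where m: "m \<in> F" "\<forall>y\<in>F. m \<subseteq> y" by auto
  show ?case
  proof (cases "x \<subseteq> m")
    case True then show ?thesis using m by auto
  next
    case False then have "m \<subseteq> x" using insert.prems m by auto
    then show ?thesis using m by auto
  qed
qed

lemma bauer:
  fixes K :: "(('b \<Rightarrow> complex) \<Rightarrow> complex) set" and \<phi> :: "(('b \<Rightarrow> complex) \<Rightarrow> complex) \<Rightarrow> real"
  assumes cK: "compact K" and clK: "closed K" and ne: "K \<noteq> {}"
    and cont: "continuous_on UNIV \<phi>" and aff: "affine_on K \<phi>"
  shows "\<exists>e\<in>extreme_fpoints K. \<forall>\<sigma>\<in>K. \<phi> \<sigma> \<le> \<phi> e"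
proof -
  define A where "A = {F. face K F \<and> F \<noteq> {} \<and> closed F \<and> (\<forall>\<sigma>\<in>F. \<forall>\<rho>\<in>K. \<phi> \<rho> \<le> \<phi> \<sigma>)}"
  have faceK: "face K K" by (auto simp: face_def)
  obtain F0 where F0: "F0 = {\<sigma>\<in>K. \<forall>\<rho>\<in>K. \<phi> \<rho> \<le> \<phi> \<sigma>}" "face K F0" "F0 \<noteq> {}" "closed F0"
    using argmax_face[OF faceK cK clK ne continuous_on_subset[OF cont] aff] by auto
  have F0A: "F0 \<in> A" using F0 unfolding A_def by auto
  have po: "partial_order_on A (relation_of (\<lambda>X Y. Y \<subseteq> X) A)"
    unfolding partial_order_on_def preorder_on_def refl_on_def trans_def antisym_def relation_of_def
    by auto
  have "\<exists>m\<in>A. \<forall>a\<in>A. a \<subseteq> m \<longrightarrow> a = m"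
  proof (rule predicate_Zorn[OF po])
    fix C assume C: "C \<in> Chains (relation_of (\<lambda>X Y. Y \<subseteq> X) A)"
    then have CA: "C \<subseteq> A" by (rule Chains_relation_of)
    have ch: "\<forall>a\<in>C. \<forall>b\<in>C. a \<subseteq> b \<or> b \<subseteq> a"
      using C unfolding Chains_def relation_of_def by blast
    show "\<exists>u\<in>A. \<forall>a\<in>C. u \<subseteq> a"
    proof (cases "C = {}")
      case True then show ?thesis using F0A by auto
    next
      case False
      have sub: "\<Inter>C \<subseteq> K" using False CA unfolding A_def face_def by blast
      have "K \<inter> \<Inter>C \<noteq> {}"
      proof (rule compact_imp_fip[OF cK])
        show "closed T" if "T \<in> C" for T using that CA unfolding A_def by auto
        fix F' assume F': "finite F'" "F' \<subseteq> C"
        show "K \<inter> \<Inter>F' \<noteq> {}"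
        proof (cases "F' = {}")
          case True then show ?thesis using ne by auto
        next
          case False
          then obtain m where m: "m \<in> F'" "\<forall>x\<in>F'. m \<subseteq> x"
            using finite_chain_min[OF F'(1) False] ch F'(2) by (metis (no_types, lifting) subsetD)
          have "m \<in> A" using m F' CA by auto
          then have "m \<noteq> {}" "m \<subseteq> K" unfolding A_def face_def by auto
          then show ?thesis using m by blast
        qed
      qed
      then have neI: "\<Inter>C \<noteq> {}" using sub by auto
      have "\<Inter>C \<in> A"
        unfolding A_def
      proof (intro CollectI conjI)
        show "\<Inter>C \<noteq> {}" by (rule neI)
        show "closed (\<Inter>C)" using CA unfolding A_def by (auto intro: closed_Inter)
        show "\<forall>\<sigma>\<in>\<Inter>C. \<forall>\<rho>\<in>K. \<phi> \<rho> \<le> \<phi> \<sigma>"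
        proof (intro ballI)
          fix \<sigma> \<rho> assume "\<sigma> \<in> \<Inter>C" "\<rho> \<in> K"
          moreover obtain X where "X \<in> C" using False by blast
          ultimately show "\<phi> \<rho> \<le> \<phi> \<sigma>" using CA unfolding A_def by blast
        qed
        have "\<forall>\<sigma>\<in>K. \<forall>\<rho>\<in>K. \<forall>t. 0 < t \<and> t < 1 \<and> comb t \<sigma> \<rho> \<in> \<Inter>C \<longrightarrow> \<sigma> \<in> \<Inter>C \<and> \<rho> \<in> \<Inter>C"
        proof (intro ballI allI impI)
          fix \<sigma> \<rho> t assume s: "\<sigma> \<in> K" "\<rho> \<in> K" and h: "0 < t \<and> t < 1 \<and> comb t \<sigma> \<rho> \<in> \<Inter>C"
          have "\<sigma> \<in> X \<and> \<rho> \<in> X" if X: "X \<in> C" for X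
          proof -
            have "face K X" using X CA unfolding A_def by blast
            then show ?thesis using s h X unfolding face_def by blast
          qed
          then show "\<sigma> \<in> \<Inter>C \<and> \<rho> \<in> \<Inter>C" by blast
        qed
        then show "face K (\<Inter>C)" using sub unfolding face_def by blast
      qed
      then show ?thesis by auto
    qed
  qed
  then obtain m where mA: "m \<in> A" and mmin: "\<forall>a\<in>A. a \<subseteq> m \<longrightarrow> a = m" by blast
  have mface: "face K m" and mne: "m \<noteq> {}" and mcl: "closed m" and mmax: "\<forall>\<sigma>\<in>m. \<forall>\<rho>\<in>K. \<phi> \<rho> \<le> \<phi> \<sigma>"
    using mA unfolding A_def by auto
  have mK: "m \<subseteq> K" using mface by (simp add: face_def)
  have mcomp: "compact m" using compact_Int_closed[OF cK mcl] mK by (simp add: Int_absorb1)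
  have single: "\<sigma> = \<rho>" if s: "\<sigma> \<in> m" "\<rho> \<in> m" for \<sigma> \<rho>
  proof (rule ccontr)
    assume "\<sigma> \<noteq> \<rho>"
    then obtain f where f: "\<sigma> f \<noteq> \<rho> f" by (metis ext)
    have ex: "\<exists>\<psi> :: (('b \<Rightarrow> complex) \<Rightarrow> complex) \<Rightarrow> real. \<psi> \<sigma> \<noteq> \<psi> \<rho> \<and> continuous_on UNIV \<psi> \<and> affine_on K \<psi>"
    proof (cases "Re (\<sigma> f) = Re (\<rho> f)")
      case True
      then have h1: "Im (\<sigma> f) \<noteq> Im (\<rho> f)" using f complex_eqI by metis
      have h2: "continuous_on UNIV (\<lambda>\<tau>::('b \<Rightarrow> complex) \<Rightarrow> complex. Im (\<tau> f))"
        by (intro continuous_intros continuous_on_product_coordinates)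
      have h3: "affine_on K (\<lambda>\<tau>. Im (\<tau> f))" by (simp add: affine_on_def comb_def)
      show ?thesis by (rule exI[of _ "\<lambda>\<tau>. Im (\<tau> f)"]) (simp only: h1 h2 h3 simp_thms)
    next
      case False
      have h2: "continuous_on UNIV (\<lambda>\<tau>::('b \<Rightarrow> complex) \<Rightarrow> complex. Re (\<tau> f))"
        by (intro continuous_intros continuous_on_product_coordinates)
      have h3: "affine_on K (\<lambda>\<tau>. Re (\<tau> f))" by (simp add: affine_on_def comb_def)
      show ?thesis by (rule exI[of _ "\<lambda>\<tau>. Re (\<tau> f)"]) (simp only: False h2 h3 simp_thms)
    qed
    then obtain \<psi> :: "(('b \<Rightarrow> complex) \<Rightarrow> complex) \<Rightarrow> real" where
      psi: "\<psi> \<sigma> \<noteq> \<psi> \<rho>" "continuous_on UNIV \<psi>" "affine_on K \<psi>" by blast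
    obtain F' where F': "F' = {\<sigma>\<in>m. \<forall>\<rho>\<in>m. \<psi> \<rho> \<le> \<psi> \<sigma>}" "face K F'" "F' \<noteq> {}" "closed F'"
      using argmax_face[OF mface mcomp mcl mne continuous_on_subset[OF psi(2)] psi(3)] by blast
    have Fm: "F' \<subseteq> m" using F'(1) by blast
    have "\<forall>\<sigma>\<in>F'. \<forall>\<rho>\<in>K. \<phi> \<rho> \<le> \<phi> \<sigma>" using mmax Fm by blast
    then have "F' \<in> A" using F'(2,3,4) unfolding A_def by blast
    then have "F' = m" using mmin Fm by blast
    then have "\<sigma> \<in> F'" "\<rho> \<in> F'" using s by simp_all
    then have "\<psi> \<rho> \<le> \<psi> \<sigma>" "\<psi> \<sigma> \<le> \<psi> \<rho>" using s unfolding F'(1) by blast+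
    then show False using psi(1) by simp
  qed
  obtain e where e: "e \<in> m" using mne by blast
  have "e \<in> extreme_fpoints K"
    unfolding extreme_fpoints_def
  proof (intro CollectI conjI ballI allI impI)
    show "e \<in> K" using e mK by blast
    fix \<sigma> \<rho> t assume s: "\<sigma> \<in> K" "\<rho> \<in> K"
      and h: "0 < t \<and> t < 1 \<and> e = (\<lambda>f. complex_of_real t * \<sigma> f + complex_of_real (1 - t) * \<rho> f)"
    then have "comb t \<sigma> \<rho> \<in> m" using e by (simp add: comb_def)
    then have "\<sigma> \<in> m" "\<rho> \<in> m" using mface s h unfolding face_def by blast+
    then show "\<sigma> = \<rho>" using single by blast
  qed
  then show ?thesis using e mmax by blast
qed



lemma cmod_mult_le: "cmod a \<le> A \<Longrightarrow> cmod b \<le> B \<Longrightarrow> cmod (a * b) \<le> A * B"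
proof -
  assume a: "cmod a \<le> A" and b: "cmod b \<le> B"
  have "0 \<le> A" using a norm_ge_zero[of a] by linarith
  then have "cmod a * cmod b \<le> A * B" using a b by (intro mult_mono) auto
  then show ?thesis by (simp add: norm_mult)
qed

lemma CX_cmul: "f \<in> CX \<Longrightarrow> g \<in> CX \<Longrightarrow> cmul f g \<in> CX"
  by (auto simp: CX_iff cmul_def intro!: continuous_intros)

lemma seq_conv:
  assumes u: "free_ultrafilter \<omega>" and tr: "\<forall>\<tau>\<in>\<Delta>. tracial_state \<tau>" and ts: "\<And>k. \<tau>s k \<in> \<Delta>"
    and s: "\<And>k. s k \<in> CX" and b: "\<And>k y. cmod (s k y) \<le> B"
  shows "((\<lambda>k. \<tau>s k (s k)) \<longlongrightarrow> Lim \<omega> (\<lambda>k. \<tau>s k (s k))) \<omega>"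
proof (rule ultra_conv[OF u])
  fix k show "cmod (\<tau>s k (s k)) \<le> 1 + B^2" using tr_bound[OF _ s b] tr ts by blast
qed

lemma Delta_compact:
  assumes cU: "compact (UNIV :: 'a::topological_space set)" and tr: "\<forall>\<tau>\<in>\<Delta>. tracial_state \<tau>"
    and cl: "closed (\<Delta> :: (('a \<Rightarrow> complex) \<Rightarrow> complex) set)"
  shows "compact \<Delta>"
proof -
  define bd where "bd f = (if f \<in> CX then 1 + (SOME B. \<forall>x. cmod (f x) \<le> B)^2 else 0)" for f :: "'a \<Rightarrow> complex"
  define P where "P = PiE UNIV (\<lambda>f. cball (0::complex) (bd f))"
  have "compactin (product_topology (\<lambda>_. euclidean) UNIV) P"
    unfolding P_def compactin_PiE by simp
  then have cP: "compact P" by (simp add: euclidean_product_topology)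
  have sub: "\<Delta> \<subseteq> P"
  proof
    fix \<tau> assume t: "\<tau> \<in> \<Delta>"
    then have tt: "tracial_state \<tau>" using tr by blast
    have "\<tau> f \<in> cball 0 (bd f)" for f
    proof (cases "f \<in> CX")
      case True
      then have "\<exists>B. \<forall>x. cmod (f x) \<le> B" using CX_bounded[OF cU] by blast
      then have "\<forall>x. cmod (f x) \<le> (SOME B. \<forall>x. cmod (f x) \<le> B)" by (rule someI_ex)
      then have "cmod (\<tau> f) \<le> bd f" using tr_bound[OF tt True] True by (simp add: bd_def)
      then show ?thesis by simp
    next
      case False then show ?thesis using tr_out[OF tt False] by (simp add: bd_def)
    qed
    then show "\<tau> \<in> P" unfolding P_def by (simp add: PiE_iff)
  qed
  have "compact (P \<inter> \<Delta>)" by (rule compact_Int_closed[OF cP cl])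
  moreover have "P \<inter> \<Delta> = \<Delta>" using sub by blast
  ultimately show ?thesis by simp
qed

lemma extreme_sub: "extreme_fpoints \<Delta> \<subseteq> \<Delta>" unfolding extreme_fpoints_def by (rule Collect_restrict)

lemma stepA:
  fixes \<Delta> :: "(('a::topological_space \<Rightarrow> complex) \<Rightarrow> complex) set"
  assumes cU: "compact (UNIV :: 'a set)" and u: "free_ultrafilter \<omega>" and tr: "\<forall>\<tau>\<in>\<Delta>. tracial_state \<tau>"
    and cE: "compact (extreme_fpoints \<Delta>)" and pl: "p \<in> linf" and n: "n \<ge> 2"
    and tp: "\<forall>\<tau>s. (\<forall>k. \<tau>s k \<in> \<Delta>) \<longrightarrow> omega_trace \<omega> \<tau>s p = 1 / of_nat n"
    and amp: "ample \<omega> \<Delta> p"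
    and es: "\<And>k. es k \<in> extreme_fpoints \<Delta>" and a: "a \<in> CX"
  shows "((\<lambda>k. es k (cmul a (p k)) - es k a / of_nat n) \<longlongrightarrow> 0) \<omega>"
proof -
  have nb: "\<omega> \<noteq> bot" using u unfolding free_ultrafilter_def by blast
  have esD: "es k \<in> \<Delta>" for k using subsetD[OF extreme_sub es] .
  have trk: "tracial_state (es k)" for k using esD tr by blast
  from ultra_lim[OF u cE es] obtain e where eE: "e \<in> extreme_fpoints \<Delta>" and lim: "(es \<longlongrightarrow> e) \<omega>" ..
  have eD: "e \<in> \<Delta>" using subsetD[OF extreme_sub eE] .
  have te: "tracial_state e" using eD tr by blast
  have pw: "((\<lambda>k. es k x) \<longlongrightarrow> e x) \<omega>" for x
    using continuous_on_tendsto_compose[OF continuous_on_product_coordinates[of x] lim] by simp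
  obtain Bp where Bp: "\<And>k y. cmod (p k y) \<le> Bp" using linf_bd[OF pl] by blast
  have pC: "p k \<in> CX" for k using linf_CX[OF pl] .
  define t where "t = omega_trace \<omega> es p"
  have esA: "\<forall>k. es k \<in> \<Delta>" using esD by blast
  have t: "t = 1 / of_nat n" unfolding t_def by (rule mp[OF spec[OF tp, of es] esA])
  have n0: "(of_nat n :: complex) \<noteq> 0" using n by simp
  have n1: "(of_nat n :: complex) \<noteq> 1" using n by simp
  have t0: "t \<noteq> 0" using t n0 by simp
  have t1: "t \<noteq> 1"
  proof
    assume "t = 1" then have "1 / (of_nat n :: complex) = 1" using t by simp
    then have "(of_nat n :: complex) = 1" using n0 by (simp add: divide_eq_1_iff)
    then show False using n1 by simp
  qed
  define \<sigma>1 where "\<sigma>1 = (\<lambda>x. if x \<in> CX then omega_trace \<omega> es (smul (const_seq x) p) / t else 0)"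
  define \<sigma>2 where "\<sigma>2 = (\<lambda>x. if x \<in> CX then omega_trace \<omega> es (smul (const_seq x) (\<lambda>k y. 1 - p k y)) / (1 - t) else 0)"
  have AA: "(t \<noteq> 0 \<longrightarrow> \<sigma>1 \<in> \<Delta>) \<and> (t \<noteq> 1 \<longrightarrow> \<sigma>2 \<in> \<Delta>)"
    using mp[OF spec[OF amp[unfolded ample_def], of es] esA] unfolding Let_def \<sigma>1_def \<sigma>2_def t_def .
  have s1: "\<sigma>1 \<in> \<Delta>" and s2: "\<sigma>2 \<in> \<Delta>" using AA t0 t1 by auto
  have conv1: "((\<lambda>k. es k (cmul x (p k))) \<longlongrightarrow> Lim \<omega> (\<lambda>k. es k (cmul x (p k)))) \<omega>"
    and conv2: "((\<lambda>k. es k (cmul x (\<lambda>y. 1 - p k y))) \<longlongrightarrow> Lim \<omega> (\<lambda>k. es k (cmul x (\<lambda>y. 1 - p k y)))) \<omega>"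
    and sum12: "Lim \<omega> (\<lambda>k. es k (cmul x (p k))) + Lim \<omega> (\<lambda>k. es k (cmul x (\<lambda>y. 1 - p k y))) = e x"
    if x: "x \<in> CX" for x
  proof -
    obtain Bx where Bx: "\<And>y. cmod (x y) \<le> Bx" using CX_bounded[OF cU x] by blast
    have c1: "cmul x (p k) \<in> CX" for k using CX_cmul[OF x pC] .
    have c1': "(\<lambda>y. 1 - p k y) \<in> CX" for k using pC[of k] by (auto simp: CX_iff intro!: continuous_intros)
    have c2: "cmul x (\<lambda>y. 1 - p k y) \<in> CX" for k using CX_cmul[OF x c1'] .
    show C1: "((\<lambda>k. es k (cmul x (p k))) \<longlongrightarrow> Lim \<omega> (\<lambda>k. es k (cmul x (p k)))) \<omega>"
      by (rule seq_conv[OF u tr esD c1, where B="Bx * Bp"]) (simp add: cmul_def cmod_mult_le Bx Bp)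
    have "cmod (1 - p k y) \<le> 1 + Bp" for k y
      using norm_triangle_ineq4[of 1 "p k y"] Bp[of k y] by simp
    then show C2: "((\<lambda>k. es k (cmul x (\<lambda>y. 1 - p k y))) \<longlongrightarrow> Lim \<omega> (\<lambda>k. es k (cmul x (\<lambda>y. 1 - p k y)))) \<omega>"
      by (intro seq_conv[OF u tr esD c2, where B="Bx * (1 + Bp)"]) (simp add: cmul_def cmod_mult_le Bx)
    have "es k (cmul x (p k)) + es k (cmul x (\<lambda>y. 1 - p k y)) = es k x" for k
    proof -
      have "es k x = es k (\<lambda>y. cmul x (p k) y + cmul x (\<lambda>y. 1 - p k y) y)"
        by (rule arg_cong[where f="es k"]) (simp add: cmul_def fun_eq_iff algebra_simps)
      then show ?thesis using tr_add[OF trk c1 c2] by simp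
    qed
    then have "((\<lambda>k. es k x) \<longlongrightarrow> Lim \<omega> (\<lambda>k. es k (cmul x (p k))) + Lim \<omega> (\<lambda>k. es k (cmul x (\<lambda>y. 1 - p k y)))) \<omega>"
      using tendsto_add[OF C1 C2] by simp
    then show "Lim \<omega> (\<lambda>k. es k (cmul x (p k))) + Lim \<omega> (\<lambda>k. es k (cmul x (\<lambda>y. 1 - p k y))) = e x"
      using tendsto_unique[OF nb _ pw] by blast
  qed
  have om1: "omega_trace \<omega> es (smul (const_seq x) p) = Lim \<omega> (\<lambda>k. es k (cmul x (p k)))" for x
    by (simp add: omega_trace_def smul_def const_seq_def)
  have om2: "omega_trace \<omega> es (smul (const_seq x) (\<lambda>k y. 1 - p k y)) = Lim \<omega> (\<lambda>k. es k (cmul x (\<lambda>y. 1 - p k y)))" for x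
    by (simp add: omega_trace_def smul_def const_seq_def)
  define r where "r = 1 / real n"
  have r: "0 < r" "r < 1" using n by (auto simp: r_def)
  have rt: "complex_of_real r = t" using t by (simp add: r_def)
  have edec: "e = (\<lambda>f. complex_of_real r * \<sigma>1 f + complex_of_real (1 - r) * \<sigma>2 f)"
  proof (rule ext)
    fix x show "e x = complex_of_real r * \<sigma>1 x + complex_of_real (1 - r) * \<sigma>2 x"
    proof (cases "x \<in> CX")
      case True
      have "complex_of_real r * \<sigma>1 x + complex_of_real (1 - r) * \<sigma>2 x
          = t * (Lim \<omega> (\<lambda>k. es k (cmul x (p k))) / t) + (1 - t) * (Lim \<omega> (\<lambda>k. es k (cmul x (\<lambda>y. 1 - p k y))) / (1 - t))"
        using True rt by (simp add: \<sigma>1_def \<sigma>2_def om1 om2)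
      also have "\<dots> = e x" using sum12[OF True] t0 t1 by simp
      finally show ?thesis by simp
    next
      case False then show ?thesis using tr_out[OF te False] by (simp add: \<sigma>1_def \<sigma>2_def)
    qed
  qed
  have ext: "\<forall>\<sigma>\<in>\<Delta>. \<forall>\<rho>\<in>\<Delta>. \<forall>t::real. 0 < t \<and> t < 1 \<and>
      e = (\<lambda>f. complex_of_real t * \<sigma> f + complex_of_real (1 - t) * \<rho> f) \<longrightarrow> \<sigma> = \<rho>"
    using eE unfolding extreme_fpoints_def mem_Collect_eq by (rule conjunct2)
  have ex1: "\<forall>t::real. 0 < t \<and> t < 1 \<and> e = (\<lambda>f. complex_of_real t * \<sigma>1 f + complex_of_real (1 - t) * \<sigma>2 f) \<longrightarrow> \<sigma>1 = \<sigma>2"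
    using bspec[OF bspec[OF ext s1] s2] .
  have "\<sigma>1 = \<sigma>2" using mp[OF spec[OF ex1, of r]] r edec by simp
  then have e1: "e = \<sigma>1" using edec by (simp add: fun_eq_iff algebra_simps)
  have "e a = Lim \<omega> (\<lambda>k. es k (cmul a (p k))) / t" using a by (simp add: e1 \<sigma>1_def om1)
  then have La: "Lim \<omega> (\<lambda>k. es k (cmul a (p k))) = e a / of_nat n" using t t0 by (simp add: field_simps)
  have "((\<lambda>k. es k (cmul a (p k)) - es k a / of_nat n) \<longlongrightarrow> e a / of_nat n - e a / of_nat n) \<omega>"
    using conv1[OF a] pw[of a] n unfolding La by (intro tendsto_intros) auto
  then show ?thesis by simp
qed

lemma re_cnj_div: "Re (cnj z / complex_of_real (cmod z) * z) = cmod z"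
proof (cases "z = 0")
  case True then show ?thesis by simp
next
  case False
  have "cnj z * z = complex_of_real ((cmod z)^2)" by (metis complex_norm_square mult.commute of_real_power)
  then have "cnj z / complex_of_real (cmod z) * z = complex_of_real ((cmod z)^2 / cmod z)"
    by (simp add: field_simps)
  also have "(cmod z)^2 / cmod z = cmod z" using False by (simp add: power2_eq_square)
  finally show ?thesis by simp
qed

lemma cmod_cnj_div: "cmod (cnj z / complex_of_real (cmod z)) \<le> 1"
proof (cases "z = 0")
  case True then show ?thesis by simp
next
  case False then show ?thesis by (simp add: norm_divide)
qed

lemma stepB:
  fixes \<Delta> :: "(('a::topological_space \<Rightarrow> complex) \<Rightarrow> complex) set"
  assumes cU: "compact (UNIV :: 'a set)" and u: "free_ultrafilter \<omega>" and tr: "\<forall>\<tau>\<in>\<Delta>. tracial_state \<tau>"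
    and cl: "closed \<Delta>"
    and cE: "compact (extreme_fpoints \<Delta>)" and pl: "p \<in> linf" and n: "n \<ge> 2"
    and tp: "\<forall>\<tau>s. (\<forall>k. \<tau>s k \<in> \<Delta>) \<longrightarrow> omega_trace \<omega> \<tau>s p = 1 / of_nat n"
    and amp: "ample \<omega> \<Delta> p"
    and ts: "\<And>k. \<tau>s k \<in> \<Delta>" and a: "a \<in> CX"
  shows "((\<lambda>k. \<tau>s k (cmul a (p k)) - \<tau>s k a / of_nat n) \<longlongrightarrow> 0) \<omega>"
proof -
  have cD: "compact \<Delta>" by (rule Delta_compact[OF cU tr cl])
  have ne: "\<Delta> \<noteq> {}" using ts[of 0] by auto
  have n0: "(of_nat n :: complex) \<noteq> 0" using n by simp
  define D where "D k \<sigma> = \<sigma> (cmul a (p k)) - \<sigma> a / of_nat n" for k and \<sigma> :: "('a \<Rightarrow> complex) \<Rightarrow> complex"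
  define c where "c k = cnj (D k (\<tau>s k)) / complex_of_real (cmod (D k (\<tau>s k)))" for k
  define \<phi> where "\<phi> k \<sigma> = Re (c k * D k \<sigma>)" for k and \<sigma> :: "('a \<Rightarrow> complex) \<Rightarrow> complex"
  have ex: "\<forall>k. \<exists>e. e \<in> extreme_fpoints \<Delta> \<and> (\<forall>\<sigma>\<in>\<Delta>. \<phi> k \<sigma> \<le> \<phi> k e)"
  proof
    fix k
    have cont: "continuous_on UNIV (\<phi> k)"
      unfolding \<phi>_def D_def by (intro continuous_intros continuous_on_product_coordinates) (use n in simp)
    have aff: "affine_on \<Delta> (\<phi> k)"
      unfolding affine_on_def
    proof (intro ballI allI impI)
      fix \<sigma> \<rho> and t :: real
      have "c k * D k (comb t \<sigma> \<rho>) = complex_of_real t * (c k * D k \<sigma>) + complex_of_real (1 - t) * (c k * D k \<rho>)"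
        using n0 n by (simp add: D_def comb_def field_simps)
      then show "\<phi> k (comb t \<sigma> \<rho>) = t * \<phi> k \<sigma> + (1 - t) * \<phi> k \<rho>"
        unfolding \<phi>_def by simp
    qed
    from bauer[OF cD cl ne cont aff] obtain e where "e \<in> extreme_fpoints \<Delta>" "\<forall>\<sigma>\<in>\<Delta>. \<phi> k \<sigma> \<le> \<phi> k e" ..
    then show "\<exists>e. e \<in> extreme_fpoints \<Delta> \<and> (\<forall>\<sigma>\<in>\<Delta>. \<phi> k \<sigma> \<le> \<phi> k e)" by (intro exI conjI)
  qed
  from choice[OF ex] obtain es where es: "\<forall>k. es k \<in> extreme_fpoints \<Delta> \<and> (\<forall>\<sigma>\<in>\<Delta>. \<phi> k \<sigma> \<le> \<phi> k (es k))" ..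
  have esE: "es k \<in> extreme_fpoints \<Delta>" for k using es by simp
  have A: "((\<lambda>k. D k (es k)) \<longlongrightarrow> 0) \<omega>"
    unfolding D_def by (rule stepA[OF cU u tr cE pl n tp amp esE a])
  have le: "cmod (D k (\<tau>s k)) \<le> cmod (D k (es k))" for k
  proof -
    have "cmod (D k (\<tau>s k)) = \<phi> k (\<tau>s k)" unfolding \<phi>_def c_def by (rule re_cnj_div[symmetric])
    also have "\<dots> \<le> \<phi> k (es k)" using es ts by blast
    also have "\<dots> \<le> cmod (c k * D k (es k))" unfolding \<phi>_def by (rule complex_Re_le_cmod)
    also have "\<dots> \<le> 1 * cmod (D k (es k))" unfolding norm_mult c_def
      by (intro mult_right_mono cmod_cnj_div norm_ge_zero)
    finally show ?thesis by simp
  qed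
  have "((\<lambda>k. D k (\<tau>s k)) \<longlongrightarrow> 0) \<omega>"
    by (rule Lim_null_comparison[OF _ tendsto_norm_zero[OF A]]) (use le in simp)
  then show ?thesis unfolding D_def .
qed

lemma J_transfer:
  fixes \<Delta> :: "(('a::topological_space \<Rightarrow> complex) \<Rightarrow> complex) set"
  assumes cU: "compact (UNIV :: 'a set)" and tr: "\<forall>\<tau>\<in>\<Delta>. tracial_state \<tau>" and ts: "\<And>k. \<tau>s k \<in> \<Delta>"
    and q: "(\<lambda>k x. s k x - t k x) \<in> J2 \<omega> \<Delta>" and sC: "\<And>k. s k \<in> CX" and tC: "\<And>k. t k \<in> CX"
    and a: "a \<in> CX"
  shows "((\<lambda>k. \<tau>s k (cmul a (s k)) - \<tau>s k (cmul a (t k))) \<longlongrightarrow> 0) \<omega>"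
proof -
  obtain M where M: "\<And>x. cmod (a x) \<le> M" using CX_bounded[OF cU a] by blast
  have M0: "M \<ge> 0" using M[of undefined] norm_ge_zero order_trans by blast
  have rC: "(\<lambda>x. cmul a (s k) x - cmul a (t k) x) \<in> CX" for k
    using CX_cmul[OF a sC] CX_cmul[OF a tC] by (auto simp: CX_iff intro!: continuous_intros)
  have b: "cmod (cmul a (s k) x - cmul a (t k) x) \<le> M * cmod (s k x - t k x)" for k x
  proof -
    have "cmul a (s k) x - cmul a (t k) x = a x * (s k x - t k x)" by (simp add: cmul_def algebra_simps)
    then show ?thesis using M[of x] by (simp add: norm_mult mult_right_mono)
  qed
  have "((\<lambda>k. \<tau>s k (\<lambda>x. cmul a (s k) x - cmul a (t k) x)) \<longlongrightarrow> 0) \<omega>"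
    by (rule J_van[OF tr q ts rC M0]) (use b in simp)
  moreover have "\<tau>s k (\<lambda>x. cmul a (s k) x - cmul a (t k) x) = \<tau>s k (cmul a (s k)) - \<tau>s k (cmul a (t k))" for k
    using tr_diff[OF _ CX_cmul[OF a sC] CX_cmul[OF a tC]] tr ts by blast
  ultimately show ?thesis by simp
qed

lemma part1:
  fixes \<omega> :: "nat filter"
    and \<Delta> :: "(('a::t2_space \<Rightarrow> complex) \<Rightarrow> complex) set"
  assumes cU: "compact (UNIV :: 'a set)"
    and u: "free_ultrafilter \<omega>"
    and tr: "\<forall>\<tau>\<in>\<Delta>. tracial_state \<tau>"
    and cl: "closed \<Delta>"
    and cE: "compact (extreme_fpoints \<Delta>)"
    and n: "n \<ge> 1" and pou: "partition_of_unity \<omega> \<Delta> n p"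
    and hp: "\<forall>i<n. (\<forall>\<tau>s. (\<forall>k. \<tau>s k \<in> \<Delta>) \<longrightarrow> omega_trace \<omega> \<tau>s (p i) = 1 / of_nat n) \<and> ample \<omega> \<Delta> (p i)"
    and a: "a \<in> CX" and tsA: "\<forall>k. \<tau>s k \<in> \<Delta>" and i: "i < n"
  shows "omega_trace \<omega> \<tau>s (smul (smul (p i) (const_seq a)) (p i)) = 1 / of_nat n * omega_trace \<omega> \<tau>s (const_seq a)"
proof -
  have nb: "\<omega> \<noteq> bot" using u unfolding free_ultrafilter_def by blast
  have ts: "\<tau>s k \<in> \<Delta>" for k using tsA by blast
  have pl: "p j \<in> linf" if "j < n" for j using pou that unfolding partition_of_unity_def by blast
  have pC: "p j k \<in> CX" if "j < n" for j k using linf_CX[OF pl[OF that]] .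
  have tp: "\<forall>\<tau>s. (\<forall>k. \<tau>s k \<in> \<Delta>) \<longrightarrow> omega_trace \<omega> \<tau>s (p i) = 1 / of_nat n" and amp: "ample \<omega> \<Delta> (p i)"
    using hp i by blast+
  let ?T = "\<lambda>k. \<tau>s k (cmul (cmul (p i k) a) (p i k))"
  have lhs: "omega_trace \<omega> \<tau>s (smul (smul (p i) (const_seq a)) (p i)) = Lim \<omega> ?T"
    by (simp add: omega_trace_def smul_def const_seq_def)
  have rhs: "omega_trace \<omega> \<tau>s (const_seq a) = Lim \<omega> (\<lambda>k. \<tau>s k a)"
    by (simp add: omega_trace_def const_seq_def)
  have q1: "(\<lambda>k x. smul (p i) (p i) k x - p i k x) \<in> J2 \<omega> \<Delta>"
    using pou i unfolding partition_of_unity_def qeq_def by blast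
  have sC: "smul (p i) (p i) k \<in> CX" for k unfolding smul_def using CX_cmul[OF pC[OF i] pC[OF i]] .
  have X1': "((\<lambda>k. \<tau>s k (cmul a (smul (p i) (p i) k)) - \<tau>s k (cmul a (p i k))) \<longlongrightarrow> 0) \<omega>"
    by (rule J_transfer[OF cU tr ts q1 sC pC[OF i] a])
  have ceq: "cmul a (smul (p i) (p i) k) = cmul (cmul (p i k) a) (p i k)" for k
    by (simp add: cmul_def smul_def fun_eq_iff mult_ac)
  have X1: "((\<lambda>k. ?T k - \<tau>s k (cmul a (p i k))) \<longlongrightarrow> 0) \<omega>" using X1' unfolding ceq .
  have X2: "((\<lambda>k. \<tau>s k (cmul a (p i k)) - \<tau>s k a / of_nat n) \<longlongrightarrow> 0) \<omega>"
  proof (cases "n \<ge> 2")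
    case True
    show ?thesis by (rule stepB[OF cU u tr cl cE pl[OF i] True tp amp ts a])
  next
    case False
    then have n1: "n = 1" using n by simp
    then have i0: "i = 0" using i by simp
    have q2: "(\<lambda>k x. (\<lambda>k x. \<Sum>j<n. p j k x) k x - (\<lambda>k x. 1) k x) \<in> J2 \<omega> \<Delta>"
      using pou unfolding partition_of_unity_def qeq_def by simp
    have sC2: "(\<lambda>k x. \<Sum>j<n. p j k x) k \<in> CX" for k using pC[of 0 k] n1 by simp
    have oC: "(\<lambda>k (x::'a). (1::complex)) k \<in> CX" for k by (simp add: CX_iff)
    have "((\<lambda>k. \<tau>s k (cmul a ((\<lambda>k x. \<Sum>j<n. p j k x) k)) - \<tau>s k (cmul a ((\<lambda>k x. 1) k))) \<longlongrightarrow> 0) \<omega>"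
      by (rule J_transfer[OF cU tr ts q2 sC2 oC a])
    moreover have "cmul a ((\<lambda>k x. \<Sum>j<n. p j k x) k) = cmul a (p i k)" for k
      using n1 i0 by (simp add: cmul_def)
    moreover have "cmul a ((\<lambda>k x. 1) k) = a" for k by (simp add: cmul_def)
    ultimately show ?thesis using n1 by simp
  qed
  obtain Ba where Ba: "\<And>x. cmod (a x) \<le> Ba" using CX_bounded[OF cU a] by blast
  have X3: "((\<lambda>k. \<tau>s k a) \<longlongrightarrow> Lim \<omega> (\<lambda>k. \<tau>s k a)) \<omega>"
    by (rule seq_conv[OF u tr ts, where s="\<lambda>k. a" and B=Ba]) (use a Ba in auto)
  have "((\<lambda>k. (?T k - \<tau>s k (cmul a (p i k))) + (\<tau>s k (cmul a (p i k)) - \<tau>s k a / of_nat n) + \<tau>s k a / of_nat n)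
        \<longlongrightarrow> 0 + 0 + Lim \<omega> (\<lambda>k. \<tau>s k a) / of_nat n) \<omega>"
    by (intro tendsto_add X1 X2 tendsto_divide X3 tendsto_const) (use n in simp)
  then have "(?T \<longlongrightarrow> Lim \<omega> (\<lambda>k. \<tau>s k a) / of_nat n) \<omega>" by simp
  then have "Lim \<omega> ?T = Lim \<omega> (\<lambda>k. \<tau>s k a) / of_nat n" using nb by (intro tendsto_Lim) auto
  then show ?thesis unfolding lhs rhs by simp
qed

theorem theorem4p4:
  fixes \<omega> :: "nat filter"
    and \<Delta> :: "(('a::t2_space \<Rightarrow> complex) \<Rightarrow> complex) set"
  assumes "compact (UNIV :: 'a set)"
    and "free_ultrafilter \<omega>"
    and "\<forall>\<tau>\<in>\<Delta>. tracial_state \<tau>"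
    and "closed \<Delta>" and "convex_fset \<Delta>"
    and "compact (extreme_fpoints \<Delta>)"
    and "\<forall>n::nat. n \<ge> 1 \<longrightarrow> (\<exists>p. partition_of_unity \<omega> \<Delta> n p \<and>
           (\<forall>i<n. (\<forall>\<tau>s. (\<forall>k. \<tau>s k \<in> \<Delta>) \<longrightarrow> omega_trace \<omega> \<tau>s (p i) = 1 / of_nat n)
                  \<and> ample \<omega> \<Delta> (p i)))"
  shows "(\<forall>n::nat. \<forall>p. n \<ge> 1 \<and> partition_of_unity \<omega> \<Delta> n p \<and>
           (\<forall>i<n. (\<forall>\<tau>s. (\<forall>k. \<tau>s k \<in> \<Delta>) \<longrightarrow> omega_trace \<omega> \<tau>s (p i) = 1 / of_nat n)
                  \<and> ample \<omega> \<Delta> (p i)) \<longrightarrow>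
           (\<forall>a \<tau>s i. a \<in> CX \<and> (\<forall>k. \<tau>s k \<in> \<Delta>) \<and> i < n \<longrightarrow>
              omega_trace \<omega> \<tau>s (smul (smul (p i) (const_seq a)) (p i))
                = 1 / of_nat n * omega_trace \<omega> \<tau>s (const_seq a)))
         \<and> approx_divisible \<omega> \<Delta>"
proof -
  note A = assms
  have P1: "\<forall>n::nat. \<forall>p. n \<ge> 1 \<and> partition_of_unity \<omega> \<Delta> n p \<and>
           (\<forall>i<n. (\<forall>\<tau>s. (\<forall>k. \<tau>s k \<in> \<Delta>) \<longrightarrow> omega_trace \<omega> \<tau>s (p i) = 1 / of_nat n)
                  \<and> ample \<omega> \<Delta> (p i)) \<longrightarrow>
           (\<forall>a \<tau>s i. a \<in> CX \<and> (\<forall>k. \<tau>s k \<in> \<Delta>) \<and> i < n \<longrightarrow>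
              omega_trace \<omega> \<tau>s (smul (smul (p i) (const_seq a)) (p i))
                = 1 / of_nat n * omega_trace \<omega> \<tau>s (const_seq a))"
  proof (intro allI impI)
    fix n :: nat and p :: "nat \<Rightarrow> nat \<Rightarrow> 'a \<Rightarrow> complex" and a :: "'a \<Rightarrow> complex"
      and \<tau>s :: "nat \<Rightarrow> ('a \<Rightarrow> complex) \<Rightarrow> complex" and i :: nat
    assume h: "1 \<le> n \<and> partition_of_unity \<omega> \<Delta> n p \<and>
           (\<forall>i<n. (\<forall>\<tau>s. (\<forall>k. \<tau>s k \<in> \<Delta>) \<longrightarrow> omega_trace \<omega> \<tau>s (p i) = 1 / of_nat n) \<and> ample \<omega> \<Delta> (p i))"
      and h2: "a \<in> CX \<and> (\<forall>k. \<tau>s k \<in> \<Delta>) \<and> i < n"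
    show "omega_trace \<omega> \<tau>s (smul (smul (p i) (const_seq a)) (p i)) = 1 / of_nat n * omega_trace \<omega> \<tau>s (const_seq a)"
      using part1[OF A(1) A(2) A(3) A(4) A(6)] h h2 by blast
  qed
  have P2: "approx_divisible \<omega> \<Delta>"
    unfolding approx_divisible_def
  proof (intro exI[of _ 1] conjI allI impI)
    show "(0::real) < 1" by simp
    fix n :: nat assume n: "1 \<le> n"
    obtain p where p: "partition_of_unity \<omega> \<Delta> n p"
      "\<forall>i<n. (\<forall>\<tau>s. (\<forall>k. \<tau>s k \<in> \<Delta>) \<longrightarrow> omega_trace \<omega> \<tau>s (p i) = 1 / of_nat n) \<and> ample \<omega> \<Delta> (p i)"
      using A(7) n by blast
    show "\<exists>p. partition_of_unity \<omega> \<Delta> n p \<and>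
        (\<forall>a \<tau>s i. positive_el a \<and> (\<forall>k. \<tau>s k \<in> \<Delta>) \<and> i < n \<longrightarrow>
           Re (omega_trace \<omega> \<tau>s (smul (smul (p i) (const_seq a)) (p i)))
             \<le> 1 / real n * Re (omega_trace \<omega> \<tau>s (const_seq a)))"
    proof (intro exI[of _ p] conjI allI impI)
      show "partition_of_unity \<omega> \<Delta> n p" by (rule p(1))
      fix a :: "'a \<Rightarrow> complex" and \<tau>s :: "nat \<Rightarrow> ('a \<Rightarrow> complex) \<Rightarrow> complex" and i :: nat
      assume h: "positive_el a \<and> (\<forall>k. \<tau>s k \<in> \<Delta>) \<and> i < n"
      then have aC: "a \<in> CX" by (simp add: positive_el_def)
      have "omega_trace \<omega> \<tau>s (smul (smul (p i) (const_seq a)) (p i)) = 1 / of_nat n * omega_trace \<omega> \<tau>s (const_seq a)"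
        using part1[OF A(1) A(2) A(3) A(4) A(6) n p(1) p(2) aC] h by blast
      then show "Re (omega_trace \<omega> \<tau>s (smul (smul (p i) (const_seq a)) (p i)))
             \<le> 1 / real n * Re (omega_trace \<omega> \<tau>s (const_seq a))" by simp
    qed
  qed
  show ?thesis using P1 P2 by blast
qed


end
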